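(* Let $\mathcal{J}=(a,b)$ be a finite interval, $m\geq3$, $\varepsilon\in[0,\varepsilon_0]$, $Q(\cdot;\varepsilon)\in L_1(\mathcal{J};\mathbb{C})$, $\alpha(\varepsilon),\beta(\varepsilon)\in\mathbb{C}^{m\times m}$, and let $A(\cdot;\varepsilon)$ be the matrix function $$A(\cdot;\varepsilon)=\begin{pmatrix} 0&1&0&\cdots&0&0\\ \vdots&\vdots&\ddots&&\vdots&\vdots\\ 0&0&0&\cdots&1&0\\ -i^{-m}Q(\cdot;\varepsilon)&0&0&\cdots&0&1\\ 0&i^{-m}Q(\cdot;\varepsilon)&0&\cdots&0&0 \end{pmatrix}$$ (ones on the superdiagonal, the displayed entries in the last two rows, all other entries zero). Suppose that, for all sufficiently small $\varepsilon$, the boundary value problem $w'=A(\cdot;\varepsilon)w+\varphi$, $\alpha(\varepsilon)w(a)+\beta(\varepsilon)w(b)=0$ has a Green matrix $G(t,s;\varepsilon)=(g_{ij}(t,s;\varepsilon))_{i,j=1}^m\in L_\infty(\mathcal{J}\times\mathcal{J})^{m\times m}$. Then (for such $\varepsilon$) the semi-homogeneous boundary value problem $$i^mD^{[m]}_\varepsilon y=f,\qquad \alpha(\varepsilon)\mathcal{Y}_\varepsilon(a)+\beta(\varepsilon)\mathcal{Y}_\varepsilon(b)=0\qquad(f\in L_2(\mathcal{J};\mathbb{C}))$$ has a Green function $\Gamma(t,s;\varepsilon)$, and $\Gamma(t,s;\varepsilon)=i^{-m}g_{1m}(t,s;\varepsilon)$ for almost all $(t,s)$.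
   Context: Quasi-derivatives: $D^{[k]}_\varepsilon y=y^{(k)}$ for $k=0,\dots,m-2$; $D^{[m-1]}_\varepsilon y=y^{(m-1)}+i^{-m}Q(\cdot;\varepsilon)y$; $D^{[m]}_\varepsilon y=(D^{[m-1]}_\varepsilon y)'-i^{-m}Q(\cdot;\varepsilon)D^{[1]}_\varepsilon y$; $\mathcal{Y}_\varepsilon(x)=(D^{[0]}_\varepsilon y(x),\dots,D^{[m-1]}_\varepsilon y(x))$. A Green matrix of the first-order problem is a matrix function $G$ such that for every $\varphi\in L_1(\mathcal{J})^m$ the problem has the unique solution $w(t)=\int_a^bG(t,s;\varepsilon)\varphi(s)\,ds$. A Green function of the scalar problem is a function $\Gamma$ such that for every $f\in L_2(\mathcal{J};\mathbb{C})$ the problem has the unique solution $y(t)=\int_a^b\Gamma(t,s;\varepsilon)f(s)\,ds$. *)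

theory Defs
  imports "HOL-Analysis.Analysis"
begin

text \<open>Conventions: vectors in C^m are functions nat => complex (only indices < m matter),
  m x m matrices are functions nat => nat => complex (0-based indices).
  The interval J = (a,b); functions are considered on the closed interval [a,b].
  Absolute continuity of u on [a,b] is expressed as u t = u a + integral over [a,t] of an
  L1 function (the a.e. derivative).\<close>

definition L1_on :: "real set \<Rightarrow> (real \<Rightarrow> complex) \<Rightarrow> bool" where
  "L1_on S f \<longleftrightarrow> f absolutely_integrable_on S"

definition L2_on :: "real set \<Rightarrow> (real \<Rightarrow> complex) \<Rightarrow> bool" where
  "L2_on S f \<longleftrightarrow> f measurable_on S \<and> (\<lambda>x. (norm (f x))^2) integrable_on S"

definition Linf_on :: "(real \<times> real) set \<Rightarrow> (real \<times> real \<Rightarrow> complex) \<Rightarrow> bool" where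
  "Linf_on S g \<longleftrightarrow> g measurable_on S \<and> (\<exists>C. AE x in lebesgue. x \<in> S \<longrightarrow> norm (g x) \<le> C)"

definition AC_with_deriv :: "real \<Rightarrow> real \<Rightarrow> (real \<Rightarrow> complex) \<Rightarrow> (real \<Rightarrow> complex) \<Rightarrow> bool" where
  "AC_with_deriv a b u h \<longleftrightarrow> h absolutely_integrable_on {a..b} \<and>
     (\<forall>t\<in>{a..b}. u t = u a + integral {a..t} h)"

definition coeffA :: "nat \<Rightarrow> complex \<Rightarrow> nat \<Rightarrow> nat \<Rightarrow> complex" where
  "coeffA m q i j =
     (if j = Suc i then 1 else 0)
   + (if i = m - 2 \<and> j = 0 then - (inverse (\<i> ^ m)) * q else 0)
   + (if i = m - 1 \<and> j = 1 then inverse (\<i> ^ m) * q else 0)"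

definition fo_solution ::
  "real \<Rightarrow> real \<Rightarrow> nat \<Rightarrow> (real \<Rightarrow> complex) \<Rightarrow> (nat \<Rightarrow> nat \<Rightarrow> complex) \<Rightarrow> (nat \<Rightarrow> nat \<Rightarrow> complex)
   \<Rightarrow> (real \<Rightarrow> nat \<Rightarrow> complex) \<Rightarrow> (real \<Rightarrow> nat \<Rightarrow> complex) \<Rightarrow> bool" where
  "fo_solution a b m Q \<alpha> \<beta> \<phi> w \<longleftrightarrow>
     (\<forall>k<m. \<exists>h. AC_with_deriv a b (\<lambda>t. w t k) h \<and>
        (AE t in lebesgue. t \<in> {a..b} \<longrightarrow>
           h t = (\<Sum>j<m. coeffA m (Q t) k j * w t j) + \<phi> t k)) \<and>
     (\<forall>i<m. (\<Sum>j<m. \<alpha> i j * w a j) + (\<Sum>j<m. \<beta> i j * w b j) = 0)"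

definition green_matrix ::
  "real \<Rightarrow> real \<Rightarrow> nat \<Rightarrow> (real \<Rightarrow> complex) \<Rightarrow> (nat \<Rightarrow> nat \<Rightarrow> complex) \<Rightarrow> (nat \<Rightarrow> nat \<Rightarrow> complex)
   \<Rightarrow> (real \<Rightarrow> real \<Rightarrow> nat \<Rightarrow> nat \<Rightarrow> complex) \<Rightarrow> bool" where
  "green_matrix a b m Q \<alpha> \<beta> G \<longleftrightarrow>
     (\<forall>\<phi>. (\<forall>k<m. L1_on {a..b} (\<lambda>s. \<phi> s k)) \<longrightarrow>
        (\<exists>w. fo_solution a b m Q \<alpha> \<beta> \<phi> w) \<and>
        (\<forall>w. fo_solution a b m Q \<alpha> \<beta> \<phi> w \<longrightarrow>
           (\<forall>t\<in>{a<..<b}. \<forall>k<m. w t k = integral {a..b} (\<lambda>s. \<Sum>j<m. G t s k j * \<phi> s j))))"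

text \<open>y is a solution of i^m D^[m] y = f with alpha Y(a) + beta Y(b) = 0;
  u k stands for the quasi-derivative D^[k] y (k < m).\<close>
definition sc_solution ::
  "real \<Rightarrow> real \<Rightarrow> nat \<Rightarrow> (real \<Rightarrow> complex) \<Rightarrow> (nat \<Rightarrow> nat \<Rightarrow> complex) \<Rightarrow> (nat \<Rightarrow> nat \<Rightarrow> complex)
   \<Rightarrow> (real \<Rightarrow> complex) \<Rightarrow> (real \<Rightarrow> complex) \<Rightarrow> bool" where
  "sc_solution a b m Q \<alpha> \<beta> f y \<longleftrightarrow>
     (\<exists>u :: nat \<Rightarrow> real \<Rightarrow> complex.
        (\<forall>t\<in>{a..b}. u 0 t = y t) \<and>
        (\<forall>k. Suc k < m - 1 \<longrightarrow> AC_with_deriv a b (u k) (u (Suc k))) \<and>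
        (\<exists>h. AC_with_deriv a b (u (m - 2)) h \<and>
           (AE t in lebesgue. t \<in> {a..b} \<longrightarrow> u (m - 1) t = h t + inverse (\<i> ^ m) * Q t * u 0 t)) \<and>
        (\<exists>h. AC_with_deriv a b (u (m - 1)) h \<and>
           (AE t in lebesgue. t \<in> {a..b} \<longrightarrow>
              \<i> ^ m * (h t - inverse (\<i> ^ m) * Q t * u 1 t) = f t)) \<and>
        (\<forall>i<m. (\<Sum>j<m. \<alpha> i j * u j a) + (\<Sum>j<m. \<beta> i j * u j b) = 0))"

definition green_function ::
  "real \<Rightarrow> real \<Rightarrow> nat \<Rightarrow> (real \<Rightarrow> complex) \<Rightarrow> (nat \<Rightarrow> nat \<Rightarrow> complex) \<Rightarrow> (nat \<Rightarrow> nat \<Rightarrow> complex)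
   \<Rightarrow> (real \<Rightarrow> real \<Rightarrow> complex) \<Rightarrow> bool" where
  "green_function a b m Q \<alpha> \<beta> \<Gamma> \<longleftrightarrow>
     (\<forall>f. L2_on {a..b} f \<longrightarrow>
        (\<exists>y. sc_solution a b m Q \<alpha> \<beta> f y) \<and>
        (\<forall>y. sc_solution a b m Q \<alpha> \<beta> f y \<longrightarrow>
           (\<forall>t\<in>{a<..<b}. y t = integral {a..b} (\<lambda>s. \<Gamma> t s * f s))))"

end

theory Submission
  imports Defs
begin

lemma AE_negl:
  assumes "AE t in lebesgue. t \<in> S \<longrightarrow> P t"
  obtains N where "negligible N" "\<And>t. t \<in> S - N \<Longrightarrow> P t"
proof -
  from AE_E[OF assms] obtain N where N0: "{x \<in> space lebesgue. \<not>(x \<in> S \<longrightarrow> P x)} \<subseteq> N"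
     "emeasure lebesgue N = 0" "N \<in> sets lebesgue" by blast
  have N: "{t. \<not>(t \<in> S \<longrightarrow> P t)} \<subseteq> N" "N \<in> null_sets lebesgue"
    using N0 by auto
  show ?thesis
  proof (rule that)
    show "negligible N" using N(2) negligible_iff_null_sets by blast
    show "P t" if "t \<in> S - N" for t using that N(1) by blast
  qed
qed

lemma ab_sets: "{a..b::real} \<in> sets lebesgue" by simp

lemma le_one_plus_sq: "(r::real) \<ge> 0 \<Longrightarrow> r \<le> 1 + r^2"
proof -
  assume r: "r \<ge> 0"
  have "0 \<le> (r - 1)^2" by simp
  then have "0 \<le> r*r - 2*r + 1" by (simp add: power2_eq_square algebra_simps)
  then show "r \<le> 1 + r^2" using r by (simp add: power2_eq_square)
qed

lemma L2_L1:
  assumes "L2_on {a..b} f" shows "f absolutely_integrable_on {a..b}"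
proof -
  have m: "f \<in> borel_measurable (lebesgue_on {a..b})" using assms unfolding L2_on_def
    using measurable_on_iff_borel_measurable[OF ab_sets] by blast
  have i: "(\<lambda>x. 1 + (norm (f x))^2) integrable_on {a..b}" using assms unfolding L2_on_def
    by (intro integrable_add) auto
  have bnd: "norm (f x) \<le> 1 + (norm (f x))^2" if "x \<in> {a..b}" for x
    by (rule le_one_plus_sq) simp
  show ?thesis by (rule measurable_bounded_by_integrable_imp_absolutely_integrable[OF m ab_sets i bnd])
qed

lemma cmult_ai: "f absolutely_integrable_on S \<Longrightarrow> (\<lambda>x. (c::complex) * f x) absolutely_integrable_on S"
  by (rule set_integrable_mult_right)

lemma AE_imp:
  assumes "AE t in M. t \<in> S \<longrightarrow> P t" and "\<And>t. t \<in> S \<Longrightarrow> P t \<Longrightarrow> Q t"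
  shows "AE t in M. t \<in> S \<longrightarrow> Q t"
  using assms(1) by (rule eventually_mono) (use assms(2) in blast)

lemma integral_AE_eq:
  assumes "AE t in lebesgue. t \<in> S \<longrightarrow> f t = g t"
  shows "integral S f = integral S g"
proof -
  obtain N where N: "negligible N" and E: "\<And>t. t \<in> S - N \<Longrightarrow> f t = g t" using AE_negl[OF assms] by blast
  show ?thesis by (rule integral_spike[OF N], rule E[symmetric])
qed

lemma ai_AE_eq:
  fixes f g :: "real \<Rightarrow> complex"
  assumes "AE t in lebesgue. t \<in> S \<longrightarrow> f t = g t" "f absolutely_integrable_on S"
  shows "g absolutely_integrable_on S"
proof -
  obtain N where N: "negligible N" and E: "\<And>t. t \<in> S - N \<Longrightarrow> f t = g t" using AE_negl[OF assms(1)] by blast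
  show ?thesis by (rule absolutely_integrable_spike[OF assms(2) N], rule E[symmetric])
qed

lemma AC_AE:
  assumes "AC_with_deriv a b u h" "AE t in lebesgue. t \<in> {a..b} \<longrightarrow> h t = g t"
  shows "AC_with_deriv a b u g"
proof -
  have hi: "h absolutely_integrable_on {a..b}" using assms(1) unfolding AC_with_deriv_def by (rule conjunct1)
  have gi: "g absolutely_integrable_on {a..b}" by (rule ai_AE_eq[OF assms(2) hi])
  have A: "\<forall>t\<in>{a..b}. u t = u a + integral {a..t} h"
    using assms(1) unfolding AC_with_deriv_def by (rule conjunct2)
  have I: "integral {a..t} h = integral {a..t} g" if t: "t \<in> {a..b}" for t
  proof -
    have "AE x in lebesgue. x \<in> {a..t} \<longrightarrow> h x = g x"
    proof (rule eventually_mono[OF assms(2)])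
      fix x assume H: "x \<in> {a..b} \<longrightarrow> h x = g x"
      show "x \<in> {a..t} \<longrightarrow> h x = g x"
      proof
        assume "x \<in> {a..t}"
        then have "x \<in> {a..b}" using t by simp
        with H show "h x = g x" by (rule mp)
      qed
    qed
    then show ?thesis by (rule integral_AE_eq)
  qed
  show ?thesis unfolding AC_with_deriv_def
  proof (rule conjI[OF gi], rule ballI)
    fix t assume t: "t \<in> {a..b}"
    have "u t = u a + integral {a..t} h" using A t by (rule bspec)
    also have "\<dots> = u a + integral {a..t} g" using I[OF t] by (rule arg_cong)
    finally show "u t = u a + integral {a..t} g" .
  qed
qed

theorem lemma5:
  fixes a b \<epsilon>0 \<epsilon> :: real and m :: nat
    and Q :: "real \<Rightarrow> real \<Rightarrow> complex"
    and \<alpha> \<beta> :: "real \<Rightarrow> nat \<Rightarrow> nat \<Rightarrow> complex"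
    and G :: "real \<Rightarrow> real \<Rightarrow> real \<Rightarrow> nat \<Rightarrow> nat \<Rightarrow> complex"
  assumes "a < b" and "m \<ge> 3"
    and "\<forall>e\<in>{0..\<epsilon>0}. L1_on {a..b} (Q e)"
    and "\<epsilon> \<in> {0..\<epsilon>0}"
    and "green_matrix a b m (Q \<epsilon>) (\<alpha> \<epsilon>) (\<beta> \<epsilon>) (G \<epsilon>)"
    and "\<forall>i<m. \<forall>j<m. Linf_on ({a..b} \<times> {a..b}) (\<lambda>x. G \<epsilon> (fst x) (snd x) i j)"
  shows "\<exists>\<Gamma>. green_function a b m (Q \<epsilon>) (\<alpha> \<epsilon>) (\<beta> \<epsilon>) \<Gamma> \<and>
           (AE x in lebesgue. x \<in> {a..b} \<times> {a..b} \<longrightarrow>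
              \<Gamma> (fst x) (snd x) = inverse (\<i> ^ m) * G \<epsilon> (fst x) (snd x) 0 (m - 1))"
proof -
  define c :: complex where "c = inverse (\<i> ^ m)"
  have ic: "\<i> ^ m * c = 1" unfolding c_def by simp
  define q where "q = Q \<epsilon>"
  define Gm where "Gm = G \<epsilon>"
  define \<Gamma> where "\<Gamma> = (\<lambda>t s. c * Gm t s 0 (m - 1))"
  have m3: "m \<ge> 3" by fact
  have GM: "green_matrix a b m q (\<alpha> \<epsilon>) (\<beta> \<epsilon>) Gm" using assms(5) q_def Gm_def by simp
  have rowlow: "(\<Sum>j<m. coeffA m qq k j * w j) = w (Suc k)" if "Suc k < m - 1" for qq k w
  proof -
    have "(\<Sum>j<m. coeffA m qq k j * w j) = (\<Sum>j<m. (if j = Suc k then w j else 0))"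
      using that by (intro sum.cong) (auto simp: coeffA_def)
    also have "\<dots> = w (Suc k)" using that by simp
    finally show ?thesis .
  qed
  have rowm2: "(\<Sum>j<m. coeffA m qq (m - 2) j * w j) = w (m - 1) - c * qq * w 0" for qq w
  proof -
    have "(\<Sum>j<m. coeffA m qq (m - 2) j * w j) =
        (\<Sum>j<m. (if j = m - 1 then w j else 0) + (if j = 0 then - c * qq * w j else 0))"
      using m3 by (intro sum.cong) (auto simp: coeffA_def c_def)
    also have "\<dots> = w (m - 1) - c * qq * w 0" using m3 by (simp add: sum.distrib)
    finally show ?thesis .
  qed
  have rowm1: "(\<Sum>j<m. coeffA m qq (m - 1) j * w j) = c * qq * w 1" for qq w
  proof -
    have "(\<Sum>j<m. coeffA m qq (m - 1) j * w j) = (\<Sum>j<m. (if j = 1 then c * qq * w j else 0))"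
      using m3 by (intro sum.cong) (auto simp: coeffA_def c_def)
    also have "\<dots> = c * qq * w 1" using m3 by simp
    finally show ?thesis .
  qed
  have GF: "green_function a b m q (\<alpha> \<epsilon>) (\<beta> \<epsilon>) \<Gamma>"
    unfolding green_function_def
  proof (intro allI impI, rule conjI)
    fix f assume f2: "L2_on {a..b} f"
    define \<phi> where "\<phi> = (\<lambda>s k. if k = m - 1 then c * f s else 0)"
    have fL1: "f absolutely_integrable_on {a..b}" using L2_L1[OF f2] .
    have \<phi>L1: "\<forall>k<m. L1_on {a..b} (\<lambda>s. \<phi> s k)"
    proof (intro allI impI)
      fix k assume "k < m"
      show "L1_on {a..b} (\<lambda>s. \<phi> s k)"
      proof (cases "k = m - 1")
        case True then show ?thesis using cmult_ai[OF fL1, of c] by (simp add: L1_on_def \<phi>_def)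
      next
        case False then show ?thesis by (simp add: L1_on_def \<phi>_def)
      qed
    qed
    have GMf: "(\<exists>w. fo_solution a b m q (\<alpha> \<epsilon>) (\<beta> \<epsilon>) \<phi> w) \<and>
        (\<forall>w. fo_solution a b m q (\<alpha> \<epsilon>) (\<beta> \<epsilon>) \<phi> w \<longrightarrow>
           (\<forall>t\<in>{a<..<b}. \<forall>k<m. w t k = integral {a..b} (\<lambda>s. \<Sum>j<m. Gm t s k j * \<phi> s j)))"
      using mp[OF spec[OF GM[unfolded green_matrix_def], of \<phi>] \<phi>L1] .
    show "\<exists>y. sc_solution a b m q (\<alpha> \<epsilon>) (\<beta> \<epsilon>) f y"
    proof -
      obtain w where w: "fo_solution a b m q (\<alpha> \<epsilon>) (\<beta> \<epsilon>) \<phi> w" using conjunct1[OF GMf] by (rule exE)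
      note wd = conjunct1[OF w[unfolded fo_solution_def]]
      note wb = conjunct2[OF w[unfolded fo_solution_def]]
      define u where "u = (\<lambda>k t. w t k)"
      have low: "\<forall>k. Suc k < m - 1 \<longrightarrow> AC_with_deriv a b (u k) (u (Suc k))"
      proof (intro allI impI)
        fix k assume k: "Suc k < m - 1"
        have km: "k < m" using k by linarith
        obtain h where hc: "AC_with_deriv a b (\<lambda>t. w t k) h \<and> (AE t in lebesgue. t \<in> {a..b} \<longrightarrow> h t = (\<Sum>j<m. coeffA m (q t) k j * w t j) + \<phi> t k)"
          using wd[rule_format, OF km] by (rule exE)
        note h1 = conjunct1[OF hc] and h2 = conjunct2[OF hc]
        have "AE t in lebesgue. t \<in> {a..b} \<longrightarrow> h t = u (Suc k) t"
        proof (rule AE_imp[OF h2])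
          fix t assume "t \<in> {a..b}" and hh: "h t = (\<Sum>j<m. coeffA m (q t) k j * w t j) + \<phi> t k"
          from hh have "h t = (\<Sum>j<m. coeffA m (q t) k j * w t j) + \<phi> t k" .
          also have "\<dots> = w t (Suc k)"
          proof -
            have "k \<noteq> m - 1" using k by linarith
            then have "\<phi> t k = 0" unfolding \<phi>_def by simp
            moreover have "(\<Sum>j<m. coeffA m (q t) k j * w t j) = w t (Suc k)" by (rule rowlow[OF k])
            ultimately show ?thesis by simp
          qed
          finally show "h t = u (Suc k) t" by (simp add: u_def)
        qed
        then have "AC_with_deriv a b (\<lambda>t. w t k) (u (Suc k))" by (rule AC_AE[OF h1])
        then show "AC_with_deriv a b (u k) (u (Suc k))" by (simp add: u_def)
      qed
      have km2: "m - 2 < m" "m - 1 < m" "m - 2 \<noteq> m - 1" using m3 by auto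
      obtain h where hc: "AC_with_deriv a b (\<lambda>t. w t (m - 2)) h \<and> (AE t in lebesgue. t \<in> {a..b} \<longrightarrow> h t = (\<Sum>j<m. coeffA m (q t) (m - 2) j * w t j) + \<phi> t (m - 2))"
        using wd[rule_format, OF km2(1)] by (rule exE)
      note h1 = conjunct1[OF hc] and h2 = conjunct2[OF hc]
      have "AE t in lebesgue. t \<in> {a..b} \<longrightarrow> u (m - 1) t = h t + inverse (\<i> ^ m) * q t * u 0 t"
      proof (rule AE_imp[OF h2])
        fix t assume "t \<in> {a..b}" and hh: "h t = (\<Sum>j<m. coeffA m (q t) (m - 2) j * w t j) + \<phi> t (m - 2)"
        from hh have "h t = (\<Sum>j<m. coeffA m (q t) (m - 2) j * w t j) + \<phi> t (m - 2)" .
        also have "\<dots> = w t (m - 1) - c * q t * w t 0"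
        proof -
          have "\<phi> t (m - 2) = 0" unfolding \<phi>_def using km2 by simp
          moreover have "(\<Sum>j<m. coeffA m (q t) (m - 2) j * w t j) = w t (m - 1) - c * q t * w t 0" by (rule rowm2)
          ultimately show ?thesis by simp
        qed
        finally show "u (m - 1) t = h t + inverse (\<i> ^ m) * q t * u 0 t" by (simp add: u_def c_def)
      qed
      then have M2: "\<exists>h. AC_with_deriv a b (u (m - 2)) h \<and>
           (AE t in lebesgue. t \<in> {a..b} \<longrightarrow> u (m - 1) t = h t + inverse (\<i> ^ m) * q t * u 0 t)"
      proof -
        have "AC_with_deriv a b (u (m - 2)) h" using h1 by (simp add: u_def)
        then show ?thesis using \<open>AE t in lebesgue. t \<in> {a..b} \<longrightarrow> u (m - 1) t = h t + inverse (\<i> ^ m) * q t * u 0 t\<close>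
          by (intro exI[of _ h] conjI)
      qed
      obtain h' where h'c: "AC_with_deriv a b (\<lambda>t. w t (m - 1)) h' \<and> (AE t in lebesgue. t \<in> {a..b} \<longrightarrow> h' t = (\<Sum>j<m. coeffA m (q t) (m - 1) j * w t j) + \<phi> t (m - 1))"
        using wd[rule_format, OF km2(2)] by (rule exE)
      note h1' = conjunct1[OF h'c] and h2' = conjunct2[OF h'c]
      have "AE t in lebesgue. t \<in> {a..b} \<longrightarrow> \<i> ^ m * (h' t - inverse (\<i> ^ m) * q t * u 1 t) = f t"
      proof (rule AE_imp[OF h2'])
        fix t assume "t \<in> {a..b}" and hh: "h' t = (\<Sum>j<m. coeffA m (q t) (m - 1) j * w t j) + \<phi> t (m - 1)"
        from hh have "h' t = (\<Sum>j<m. coeffA m (q t) (m - 1) j * w t j) + \<phi> t (m - 1)" .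
        also have "\<dots> = c * q t * w t 1 + c * f t"
        proof -
          have "\<phi> t (m - 1) = c * f t" unfolding \<phi>_def by simp
          moreover have "(\<Sum>j<m. coeffA m (q t) (m - 1) j * w t j) = c * q t * w t 1" by (rule rowm1)
          ultimately show ?thesis by simp
        qed
        finally have "h' t - c * q t * w t 1 = c * f t" by simp
        then have "\<i> ^ m * (h' t - c * q t * w t 1) = (\<i> ^ m * c) * f t" by (simp only: mult.assoc)
        then show "\<i> ^ m * (h' t - inverse (\<i> ^ m) * q t * u 1 t) = f t" by (simp add: u_def ic c_def[symmetric])
      qed
      then have M1: "\<exists>h. AC_with_deriv a b (u (m - 1)) h \<and>
           (AE t in lebesgue. t \<in> {a..b} \<longrightarrow> \<i> ^ m * (h t - inverse (\<i> ^ m) * q t * u 1 t) = f t)"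
      proof -
        have "AC_with_deriv a b (u (m - 1)) h'" using h1' by (simp add: u_def)
        then show ?thesis using \<open>AE t in lebesgue. t \<in> {a..b} \<longrightarrow> \<i> ^ m * (h' t - inverse (\<i> ^ m) * q t * u 1 t) = f t\<close>
          by (intro exI[of _ h'] conjI)
      qed
      have B: "\<forall>i<m. (\<Sum>j<m. \<alpha> \<epsilon> i j * u j a) + (\<Sum>j<m. \<beta> \<epsilon> i j * u j b) = 0"
        using wb unfolding u_def by simp
      have U0: "\<forall>t\<in>{a..b}. u 0 t = u 0 t" by simp
      have "sc_solution a b m q (\<alpha> \<epsilon>) (\<beta> \<epsilon>) f (u 0)"
        unfolding sc_solution_def by (rule exI[of _ u], rule conjI[OF U0 conjI[OF low conjI[OF M2 conjI[OF M1 B]]]])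
      then show ?thesis by (rule exI[where x="u 0"])
    qed
    show "\<forall>y. sc_solution a b m q (\<alpha> \<epsilon>) (\<beta> \<epsilon>) f y \<longrightarrow>
           (\<forall>t\<in>{a<..<b}. y t = integral {a..b} (\<lambda>s. \<Gamma> t s * f s))"
    proof (intro allI impI ballI)
      fix y t assume sc: "sc_solution a b m q (\<alpha> \<epsilon>) (\<beta> \<epsilon>) f y" and t: "t \<in> {a<..<b}"
      obtain u where U: "(\<forall>t\<in>{a..b}. u 0 t = y t) \<and>
        (\<forall>k. Suc k < m - 1 \<longrightarrow> AC_with_deriv a b (u k) (u (Suc k))) \<and>
        (\<exists>h. AC_with_deriv a b (u (m - 2)) h \<and>
           (AE t in lebesgue. t \<in> {a..b} \<longrightarrow> u (m - 1) t = h t + inverse (\<i> ^ m) * q t * u 0 t)) \<and>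
        (\<exists>h. AC_with_deriv a b (u (m - 1)) h \<and>
           (AE t in lebesgue. t \<in> {a..b} \<longrightarrow> \<i> ^ m * (h t - inverse (\<i> ^ m) * q t * u 1 t) = f t)) \<and>
        (\<forall>i<m. (\<Sum>j<m. \<alpha> \<epsilon> i j * u j a) + (\<Sum>j<m. \<beta> \<epsilon> i j * u j b) = 0)"
        using sc[unfolded sc_solution_def] by (rule exE)
      note u0 = conjunct1[OF U]
      note ulow = conjunct1[OF conjunct2[OF U]]
      note um2 = conjunct1[OF conjunct2[OF conjunct2[OF U]]]
      note um1 = conjunct1[OF conjunct2[OF conjunct2[OF conjunct2[OF U]]]]
      note ub = conjunct2[OF conjunct2[OF conjunct2[OF conjunct2[OF U]]]]
      define w where "w = (\<lambda>t k. u k t)"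
      have fo: "fo_solution a b m q (\<alpha> \<epsilon>) (\<beta> \<epsilon>) \<phi> w"
        unfolding fo_solution_def
      proof (intro conjI allI impI)
        fix k assume k: "k < m"
        consider "Suc k < m - 1" | "k = m - 2" | "k = m - 1" using k m3 by linarith
        then show "\<exists>h. AC_with_deriv a b (\<lambda>t. w t k) h \<and>
        (AE t in lebesgue. t \<in> {a..b} \<longrightarrow> h t = (\<Sum>j<m. coeffA m (q t) k j * w t j) + \<phi> t k)"
        proof cases
          case 1
          have "AE t in lebesgue. t \<in> {a..b} \<longrightarrow> u (Suc k) t = (\<Sum>j<m. coeffA m (q t) k j * w t j) + \<phi> t k"
          proof (intro AE_I2 impI)
            fix t
            have "(\<Sum>j<m. coeffA m (q t) k j * w t j) = w t (Suc k)" using 1 by (rule rowlow)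
            moreover have "k \<noteq> m - 1" using 1 by linarith
            then have "\<phi> t k = 0" unfolding \<phi>_def by simp
            ultimately show "u (Suc k) t = (\<Sum>j<m. coeffA m (q t) k j * w t j) + \<phi> t k"
              by (simp add: w_def)
          qed
          moreover have "AC_with_deriv a b (u k) (u (Suc k))" using ulow[rule_format, OF 1] .
          then have "AC_with_deriv a b (\<lambda>t. w t k) (u (Suc k))" by (simp add: w_def)
          ultimately show ?thesis by (intro exI[of _ "u (Suc k)"] conjI)
        next
          case 2
          obtain h where hc: "AC_with_deriv a b (u (m - 2)) h \<and> (AE t in lebesgue. t \<in> {a..b} \<longrightarrow> u (m - 1) t = h t + inverse (\<i> ^ m) * q t * u 0 t)"
            using um2 by (rule exE)
          note h1 = conjunct1[OF hc] and h2 = conjunct2[OF hc]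
          have "AE t in lebesgue. t \<in> {a..b} \<longrightarrow> h t = (\<Sum>j<m. coeffA m (q t) k j * w t j) + \<phi> t k"
          proof (rule AE_imp[OF h2])
            fix t assume "t \<in> {a..b}" and hh: "u (m - 1) t = h t + inverse (\<i> ^ m) * q t * u 0 t"
            have "(\<Sum>j<m. coeffA m (q t) k j * w t j) = w t (m - 1) - c * q t * w t 0"
              unfolding 2 by (rule rowm2)
            moreover have "m - 2 \<noteq> m - 1" using m3 by linarith
            then have "\<phi> t k = 0" unfolding 2 \<phi>_def by simp
            ultimately show "h t = (\<Sum>j<m. coeffA m (q t) k j * w t j) + \<phi> t k"
              using hh by (simp add: w_def c_def)
          qed
          moreover have "AC_with_deriv a b (\<lambda>t. w t k) h" using h1 2 by (simp add: w_def)
          ultimately show ?thesis by (intro exI[of _ h] conjI)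
        next
          case 3
          obtain h where hc: "AC_with_deriv a b (u (m - 1)) h \<and> (AE t in lebesgue. t \<in> {a..b} \<longrightarrow> \<i> ^ m * (h t - inverse (\<i> ^ m) * q t * u 1 t) = f t)"
            using um1 by (rule exE)
          note h1 = conjunct1[OF hc] and h2 = conjunct2[OF hc]
          have "AE t in lebesgue. t \<in> {a..b} \<longrightarrow> h t = (\<Sum>j<m. coeffA m (q t) k j * w t j) + \<phi> t k"
          proof (rule AE_imp[OF h2])
            fix s assume "s \<in> {a..b}" and hh: "\<i> ^ m * (h s - inverse (\<i> ^ m) * q s * u 1 s) = f s"
            then have e: "\<i> ^ m * (h s - c * q s * u 1 s) = f s" by (simp add: c_def)
            have "c * f s = (c * \<i> ^ m) * (h s - c * q s * u 1 s)"
              using e[symmetric] by (simp only: mult.assoc)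
            also have "c * \<i> ^ m = 1" using ic by (simp only: mult.commute)
            finally have X: "c * f s = h s - c * q s * u 1 s" by simp
            have "(\<Sum>j<m. coeffA m (q s) k j * w s j) = c * q s * w s 1"
              unfolding 3 by (rule rowm1)
            moreover have "\<phi> s k = c * f s" unfolding 3 \<phi>_def by simp
            ultimately show "h s = (\<Sum>j<m. coeffA m (q s) k j * w s j) + \<phi> s k"
              using X by (simp add: w_def)
          qed
          moreover have "AC_with_deriv a b (\<lambda>t. w t k) h" using h1 3 by (simp add: w_def)
          ultimately show ?thesis by (intro exI[of _ h] conjI)
        qed
      next
        fix i assume "i < m"
        then show "(\<Sum>j<m. \<alpha> \<epsilon> i j * w a j) + (\<Sum>j<m. \<beta> \<epsilon> i j * w b j) = 0"
          using ub[rule_format, OF \<open>i < m\<close>] by (simp add: w_def)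
      qed
      have "w t 0 = integral {a..b} (\<lambda>s. \<Sum>j<m. Gm t s 0 j * \<phi> s j)"
        using conjunct2[OF GMf, rule_format, OF fo t] m3 by simp
      also have "\<dots> = integral {a..b} (\<lambda>s. \<Gamma> t s * f s)"
      proof (rule integral_cong)
        fix s
        have "(\<Sum>j<m. Gm t s 0 j * \<phi> s j) = (\<Sum>j<m. if j = m - 1 then Gm t s 0 (m - 1) * (c * f s) else 0)"
          by (intro sum.cong) (auto simp: \<phi>_def)
        also have "\<dots> = Gm t s 0 (m - 1) * (c * f s)" using m3 by simp
        finally show "(\<Sum>j<m. Gm t s 0 j * \<phi> s j) = \<Gamma> t s * f s" by (simp add: \<Gamma>_def)
      qed
      finally show "y t = integral {a..b} (\<lambda>s. \<Gamma> t s * f s)"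
        using u0 t by (simp add: w_def)
    qed
  qed
  have AEg: "AE x in lebesgue. x \<in> {a..b} \<times> {a..b} \<longrightarrow>
              \<Gamma> (fst x) (snd x) = inverse (\<i> ^ m) * G \<epsilon> (fst x) (snd x) 0 (m - 1)"
    by (intro AE_I2 impI) (simp add: \<Gamma>_def Gm_def c_def)
  have GF': "green_function a b m (Q \<epsilon>) (\<alpha> \<epsilon>) (\<beta> \<epsilon>) \<Gamma>" using GF by (simp only: q_def)
  show ?thesis by (rule exI[of _ \<Gamma>], rule conjI[OF GF' AEg])
qed

end
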